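(* For every integer $k\geq 0$, the Laurent polynomial \[ T_k(x)=\sum_{l=0}^{k}B_{k-l}(x^{k+1})(x^{k+1}-1)^l\sum_{i=l}^{k}\binom{i}{l}x^{-i} \] is unimodal, i.e. its sequence of coefficients (equivalently, the coefficient sequence of the polynomial $x^kT_k(x)$) is unimodal.
   Context: A signed permutation $\pi=\pi_1\cdots\pi_n$ of $[n]$ is a permutation of $[n]$ in which each entry may carry a minus sign; $B_n$ denotes the set of them. With the convention $\pi_0=0$, $\mathrm{des}_B(\pi)$ is the number of $i\in\{0,1,\dots,n-1\}$ with $\pi_i>\pi_{i+1}$. The type $B$ Eulerian polynomial is $B_n(y)=\sum_{\pi\in B_n}y^{\mathrm{des}_B(\pi)}$, with $B_0(y)=1$. A sequence $s_1,\dots,s_m$ is unimodal if there is $t$ with $s_1\le\cdots\le s_t\ge s_{t+1}\ge\cdots\ge s_m$. *)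

theory Defs
  imports "HOL-Computational_Algebra.Polynomial"
begin

text \<open>Signed permutations of [n]: functions w with w i = 0 outside {1..n}
  (so the convention pi_0 = 0 holds) and i \<mapsto> |w i| a bijection of {1..n}.\<close>
definition signed_perms :: "nat \<Rightarrow> (nat \<Rightarrow> int) set" where
  "signed_perms n = {w. (\<forall>i. i \<notin> {1..n} \<longrightarrow> w i = 0) \<and>
                         bij_betw (\<lambda>i. nat \<bar>w i\<bar>) {1..n} {1..n}}"

definition desB :: "nat \<Rightarrow> (nat \<Rightarrow> int) \<Rightarrow> nat" where
  "desB n w = card {i \<in> {0..<n}. w i > w (Suc i)}"

definition eulerB :: "nat \<Rightarrow> int poly" where
  "eulerB n = (\<Sum>w\<in>signed_perms n. monom 1 (desB n w))"

text \<open>x^k T_k(x), a genuine polynomial.\<close>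
definition Tpoly :: "nat \<Rightarrow> int poly" where
  "Tpoly k = (\<Sum>l=0..k. pcompose (eulerB (k - l)) (monom 1 (k+1))
       * (monom 1 (k+1) - 1) ^ l
       * (\<Sum>i=l..k. monom (int (i choose l)) (k - i)))"

definition unimodal_list :: "'a::linorder list \<Rightarrow> bool" where
  "unimodal_list s \<longleftrightarrow> (\<exists>t. (\<forall>i j. i \<le> j \<and> j \<le> t \<and> j < length s \<longrightarrow> s!i \<le> s!j) \<and>
                           (\<forall>i j. t \<le> i \<and> i \<le> j \<and> j < length s \<longrightarrow> s!j \<le> s!i))"

end

theory Submission
  imports Defs
begin

lemma sp_iff: "w \<in> signed_perms n \<longleftrightarrow>
   (\<forall>i. i \<notin> {1..n} \<longrightarrow> w i = 0) \<and> (\<lambda>i. nat \<bar>w i\<bar>) ` {1..n} = {1..n}"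
proof -
  have "bij_betw (\<lambda>i. nat \<bar>w i\<bar>) {1..n} {1..n} \<longleftrightarrow> (\<lambda>i. nat \<bar>w i\<bar>) ` {1..n} = {1..n}"
    unfolding bij_betw_def using eq_card_imp_inj_on[of "{1..n}" "\<lambda>i. nat \<bar>w i\<bar>"] by auto
  then show ?thesis unfolding signed_perms_def by auto
qed

lemma sp_zero: "w \<in> signed_perms n \<Longrightarrow> i \<notin> {1..n} \<Longrightarrow> w i = 0"
  by (simp add: sp_iff)

lemma sp_bound: assumes "w \<in> signed_perms n" shows "\<bar>w i\<bar> \<le> int n"
proof (cases "i \<in> {1..n}")
  case True
  then have "nat \<bar>w i\<bar> \<in> {1..n}" using assms by (auto simp: sp_iff)
  then show ?thesis by auto
next
  case False then show ?thesis using sp_zero[OF assms] by auto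
qed

lemma sp_inj: "w \<in> signed_perms n \<Longrightarrow> inj_on (\<lambda>i. nat \<bar>w i\<bar>) {1..n}"
  unfolding signed_perms_def bij_betw_def by auto

definition ins :: "(nat \<Rightarrow> int) \<Rightarrow> nat \<Rightarrow> int \<Rightarrow> nat \<Rightarrow> int" where
  "ins w p v = (\<lambda>i. if i < p then w i else if i = p then v else w (i - 1))"

definition del :: "(nat \<Rightarrow> int) \<Rightarrow> nat \<Rightarrow> nat \<Rightarrow> int" where
  "del u p = (\<lambda>i. if i < p then u i else u (Suc i))"

lemma ins_sp:
  assumes w: "w \<in> signed_perms n" and p: "p \<in> {1..Suc n}" and v: "\<bar>v\<bar> = int (Suc n)"
  shows "ins w p v \<in> signed_perms (Suc n)"
  unfolding sp_iff
proof (intro conjI allI impI)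
  fix i assume i: "i \<notin> {1..Suc n}"
  show "ins w p v i = 0"
  proof (cases "i = 0")
    case True then show ?thesis using p sp_zero[OF w, of 0] by (auto simp: ins_def)
  next
    case False
    then have "i > Suc n" using i by auto
    moreover have "i - 1 \<notin> {1..n}" using \<open>i > Suc n\<close> by auto
    ultimately show ?thesis using p sp_zero[OF w, of "i - 1"] by (auto simp: ins_def)
  qed
next
  show "(\<lambda>i. nat \<bar>ins w p v i\<bar>) ` {1..Suc n} = {1..Suc n}"
  proof
    show "(\<lambda>i. nat \<bar>ins w p v i\<bar>) ` {1..Suc n} \<subseteq> {1..Suc n}"
    proof
      fix y assume "y \<in> (\<lambda>i. nat \<bar>ins w p v i\<bar>) ` {1..Suc n}"
      then obtain i where i: "i \<in> {1..Suc n}" and y: "y = nat \<bar>ins w p v i\<bar>" by auto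
      have img: "nat \<bar>w j\<bar> \<in> {1..n}" if "j \<in> {1..n}" for j
        using that w by (auto simp: sp_iff)
      show "y \<in> {1..Suc n}"
      proof (cases "i < p")
        case True
        then have "i \<in> {1..n}" using i p by auto
        then show ?thesis using img[of i] True y by (auto simp: ins_def)
      next
        case False
        show ?thesis
        proof (cases "i = p")
          case True then show ?thesis using y v by (auto simp: ins_def)
        next
          case False2: False
          then have "i - 1 \<in> {1..n}" using i p False by auto
          then show ?thesis using img[of "i - 1"] False False2 y by (auto simp: ins_def)
        qed
      qed
    qed
  next
    show "{1..Suc n} \<subseteq> (\<lambda>i. nat \<bar>ins w p v i\<bar>) ` {1..Suc n}"
    proof
      fix y assume y: "y \<in> {1..Suc n}"
      show "y \<in> (\<lambda>i. nat \<bar>ins w p v i\<bar>) ` {1..Suc n}"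
      proof (cases "y = Suc n")
        case True
        then have "y = nat \<bar>ins w p v p\<bar>" using v by (simp add: ins_def)
        then show ?thesis using p by blast
      next
        case False
        then have "y \<in> {1..n}" using y by auto
        then have "y \<in> (\<lambda>i. nat \<bar>w i\<bar>) ` {1..n}" using w by (simp add: sp_iff)
        then obtain j where j: "j \<in> {1..n}" "y = nat \<bar>w j\<bar>" by auto
        show ?thesis
        proof (cases "j < p")
          case True
          then have "y = nat \<bar>ins w p v j\<bar>" using j by (simp add: ins_def)
          then show ?thesis using j by force
        next
          case False
          then have "y = nat \<bar>ins w p v (Suc j)\<bar>" using j by (simp add: ins_def)
          then show ?thesis using j by force
        qed
      qed
    qed
  qed
qed

lemma del_sp:
  assumes u: "u \<in> signed_perms (Suc n)" and p: "p \<in> {1..Suc n}" and up: "nat \<bar>u p\<bar> = Suc n"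
  shows "del u p \<in> signed_perms n"
  unfolding sp_iff
proof (intro conjI allI impI)
  fix i assume i: "i \<notin> {1..n}"
  show "del u p i = 0"
  proof (cases "i = 0")
    case True then show ?thesis using p sp_zero[OF u, of 0] by (auto simp: del_def)
  next
    case False
    then have "i > n" using i by auto
    then show ?thesis using p sp_zero[OF u, of "Suc i"] by (auto simp: del_def)
  qed
next
  have inj: "inj_on (\<lambda>i. nat \<bar>u i\<bar>) {1..Suc n}" using sp_inj[OF u] .
  have img: "nat \<bar>u j\<bar> \<in> {1..Suc n}" if "j \<in> {1..Suc n}" for j
    using that u by (auto simp: sp_iff)
  have ne: "nat \<bar>u j\<bar> \<noteq> Suc n" if "j \<in> {1..Suc n}" "j \<noteq> p" for j
    using inj_onD[OF inj, of j p] that p up by auto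
  show "(\<lambda>i. nat \<bar>del u p i\<bar>) ` {1..n} = {1..n}"
  proof
    show "(\<lambda>i. nat \<bar>del u p i\<bar>) ` {1..n} \<subseteq> {1..n}"
    proof
      fix y assume "y \<in> (\<lambda>i. nat \<bar>del u p i\<bar>) ` {1..n}"
      then obtain i where i: "i \<in> {1..n}" and y: "y = nat \<bar>del u p i\<bar>" by auto
      show "y \<in> {1..n}"
      proof (cases "i < p")
        case True
        then show ?thesis using img[of i] ne[of i] i y by (auto simp: del_def)
      next
        case False
        then show ?thesis using img[of "Suc i"] ne[of "Suc i"] i y by (auto simp: del_def)
      qed
    qed
  next
    show "{1..n} \<subseteq> (\<lambda>i. nat \<bar>del u p i\<bar>) ` {1..n}"
    proof
      fix y assume y: "y \<in> {1..n}"
      then have "y \<in> (\<lambda>i. nat \<bar>u i\<bar>) ` {1..Suc n}" using u by (auto simp: sp_iff)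
      then obtain j where j: "j \<in> {1..Suc n}" "y = nat \<bar>u j\<bar>" by auto
      have "j \<noteq> p" using j y up by auto
      show "y \<in> (\<lambda>i. nat \<bar>del u p i\<bar>) ` {1..n}"
      proof (cases "j < p")
        case True
        then have "y = nat \<bar>del u p j\<bar>" using j by (simp add: del_def)
        moreover have "j \<in> {1..n}" using True j p by auto
        ultimately show ?thesis by blast
      next
        case False
        then have "y = nat \<bar>del u p (j - 1)\<bar>" using j \<open>j \<noteq> p\<close> by (simp add: del_def)
        moreover have "j - 1 \<in> {1..n}" using False j p \<open>j \<noteq> p\<close> by auto
        ultimately show ?thesis by blast
      qed
    qed
  qed
qed

lemma ins_at: assumes w: "w \<in> signed_perms n" and v: "\<bar>v\<bar> = int (Suc n)"
  shows "nat \<bar>ins w p v i\<bar> = Suc n \<longleftrightarrow> i = p"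
proof -
  have "\<bar>w j\<bar> \<le> int n" for j using sp_bound[OF w] .
  then show ?thesis using v unfolding ins_def by (auto split: if_splits) (metis Suc_n_not_le_n nat_le_iff)+
qed

lemma del_ins: "del (ins w p v) p = w"
  by (rule ext) (auto simp: del_def ins_def)

lemma ins_del: "ins (del u p) p (u p) = u"
  by (rule ext) (auto simp: del_def ins_def)

lemma ins_bij: "bij_betw (\<lambda>(w,p,v). ins w p v)
   (signed_perms n \<times> {1..Suc n} \<times> {int (Suc n), - int (Suc n)}) (signed_perms (Suc n))"
  unfolding bij_betw_def
proof (intro conjI)
  show "inj_on (\<lambda>(w,p,v). ins w p v) (signed_perms n \<times> {1..Suc n} \<times> {int (Suc n), - int (Suc n)})"
  proof (rule inj_onI)
    fix x y assume x: "x \<in> signed_perms n \<times> {1..Suc n} \<times> {int (Suc n), - int (Suc n)}"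
      and y: "y \<in> signed_perms n \<times> {1..Suc n} \<times> {int (Suc n), - int (Suc n)}"
      and eq0: "(\<lambda>(w,p,v). ins w p v) x = (\<lambda>(w,p,v). ins w p v) y"
    obtain w p v where xx: "x = (w,p,v)" by (cases x) auto
    obtain w' p' v' where yy: "y = (w',p',v')" by (cases y) auto
    have w: "w \<in> signed_perms n" and w': "w' \<in> signed_perms n"
      and v: "v \<in> {int (Suc n), - int (Suc n)}" and v': "v' \<in> {int (Suc n), - int (Suc n)}"
      using x y xx yy by auto
    have eq: "ins w p v = ins w' p' v'" using eq0 xx yy by simp
    have av: "\<bar>v\<bar> = int (Suc n)" "\<bar>v'\<bar> = int (Suc n)" using v v' by auto
    have "nat \<bar>ins w' p' v' p\<bar> = Suc n" using ins_at[OF w av(1), of p p] eq by simp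
    then have pp: "p = p'" using ins_at[OF w' av(2), of p' p] by simp
    have "v = v'" using fun_cong[OF eq, of p] pp by (simp add: ins_def)
    moreover have "w = w'" using arg_cong[OF eq, of "\<lambda>u. del u p"] pp by (simp add: del_ins)
    ultimately show "x = y" using pp xx yy by simp
  qed
next
  show "(\<lambda>(w,p,v). ins w p v) ` (signed_perms n \<times> {1..Suc n} \<times> {int (Suc n), - int (Suc n)}) = signed_perms (Suc n)"
  proof
    show "(\<lambda>(w,p,v). ins w p v) ` (signed_perms n \<times> {1..Suc n} \<times> {int (Suc n), - int (Suc n)}) \<subseteq> signed_perms (Suc n)"
      using ins_sp by auto
  next
    show "signed_perms (Suc n) \<subseteq> (\<lambda>(w,p,v). ins w p v) ` (signed_perms n \<times> {1..Suc n} \<times> {int (Suc n), - int (Suc n)})"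
    proof
      fix u assume u: "u \<in> signed_perms (Suc n)"
      then have "Suc n \<in> (\<lambda>i. nat \<bar>u i\<bar>) ` {1..Suc n}" by (simp add: sp_iff)
      then obtain p where p: "p \<in> {1..Suc n}" "nat \<bar>u p\<bar> = Suc n" by auto
      have d: "del u p \<in> signed_perms n" using del_sp[OF u p] .
      have e: "u p \<in> {int (Suc n), - int (Suc n)}" using p(2) by auto
      show "u \<in> (\<lambda>(w,p,v). ins w p v) ` (signed_perms n \<times> {1..Suc n} \<times> {int (Suc n), - int (Suc n)})"
      proof -
        have "(del u p, p, u p) \<in> signed_perms n \<times> {1..Suc n} \<times> {int (Suc n), - int (Suc n)}"
          using d e p(1) by auto
        moreover have "u = (\<lambda>(w,p,v). ins w p v) (del u p, p, u p)" using ins_del[of u p] by simp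
        ultimately show ?thesis by (rule rev_image_eqI)
      qed
    qed
  qed
qed


definition dd :: "(nat \<Rightarrow> int) \<Rightarrow> nat \<Rightarrow> nat" where
  "dd w i = (if w (Suc i) < w i then 1 else 0)"

lemma desB_sum: "desB n w = (\<Sum>i<n. dd w i)"
proof -
  have "desB n w = (\<Sum>i\<in>{i \<in> {0..<n}. w i > w (Suc i)}. 1)"
    unfolding desB_def by (rule card_eq_sum)
  also have "\<dots> = (\<Sum>i\<in>{0..<n}. if w i > w (Suc i) then 1 else 0)"
    by (rule sum.inter_filter) simp
  finally show ?thesis by (simp add: dd_def atLeast0LessThan)
qed

lemma split3: "q < n \<Longrightarrow> (\<Sum>i<Suc n. f i) = (\<Sum>i<q. f i) + f q + f (Suc q) + (\<Sum>i\<in>{Suc (Suc q)..<Suc n}. f i)"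
proof -
  assume q: "q < n"
  have "(\<Sum>i<Suc n. f i) = (\<Sum>i\<in>{0..<q}. f i) + (\<Sum>i\<in>{q..<Suc n}. f i)"
    using sum.atLeastLessThan_concat[of 0 q "Suc n" f] q by (simp add: lessThan_atLeast0)
  also have "(\<Sum>i\<in>{q..<Suc n}. f i) = f q + (\<Sum>i\<in>{Suc q..<Suc n}. f i)"
    using q by (intro sum.atLeast_Suc_lessThan) simp
  also have "(\<Sum>i\<in>{Suc q..<Suc n}. f i) = f (Suc q) + (\<Sum>i\<in>{Suc (Suc q)..<Suc n}. f i)"
    using q by (intro sum.atLeast_Suc_lessThan) simp
  finally show ?thesis by (simp add: lessThan_atLeast0 add.assoc)
qed

lemma split2: "q < n \<Longrightarrow> (\<Sum>i<n. f i) = (\<Sum>i<q. f i) + f q + (\<Sum>i\<in>{Suc q..<n}. f i)"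
proof -
  assume q: "q < n"
  have "(\<Sum>i<n. f i) = (\<Sum>i\<in>{0..<q}. f i) + (\<Sum>i\<in>{q..<n}. f i)"
    using sum.atLeastLessThan_concat[of 0 q n f] q by (simp add: lessThan_atLeast0)
  also have "(\<Sum>i\<in>{q..<n}. f i) = f q + (\<Sum>i\<in>{Suc q..<n}. f i)"
    using q by (intro sum.atLeast_Suc_lessThan) simp
  finally show ?thesis by (simp add: lessThan_atLeast0 add.assoc)
qed

lemma desB_ins_lt:
  assumes w: "w \<in> signed_perms n" and q: "q < n" and v: "v \<in> {int (Suc n), - int (Suc n)}"
  shows "desB (Suc n) (ins w (Suc q) v) + dd w q = desB n w + 1"
proof -
  define u where "u = ins w (Suc q) v"
  have bd: "\<bar>w j\<bar> \<le> int n" for j using sp_bound[OF w] .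
  have C1: "(\<Sum>i<q. dd u i) = (\<Sum>i<q. dd w i)"
    by (rule sum.cong) (auto simp: dd_def ins_def u_def)
  have C2: "dd u q + dd u (Suc q) = 1"
    using v bd[of q] bd[of "Suc q"] by (auto simp: dd_def ins_def u_def)
  have C3: "(\<Sum>i\<in>{Suc (Suc q)..<Suc n}. dd u i) = (\<Sum>i\<in>{Suc q..<n}. dd w i)"
    by (simp only: sum.shift_bounds_Suc_ivl) (rule sum.cong, auto simp: dd_def ins_def u_def)
  show ?thesis
    unfolding desB_sum u_def[symmetric] using split3[OF q, of "dd u"] split2[OF q, of "dd w"] C1 C2 C3
    by simp
qed

lemma desB_ins_end:
  assumes w: "w \<in> signed_perms n" and v: "v \<in> {int (Suc n), - int (Suc n)}"
  shows "desB (Suc n) (ins w (Suc n) v) = desB n w + (if v < 0 then 1 else 0)"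
proof -
  define u where "u = ins w (Suc n) v"
  have bd: "\<bar>w j\<bar> \<le> int n" for j using sp_bound[OF w] .
  have C1: "(\<Sum>i<n. dd u i) = (\<Sum>i<n. dd w i)"
    by (rule sum.cong) (auto simp: dd_def ins_def u_def)
  have C2: "dd u n = (if v < 0 then 1 else 0)"
    using v bd[of n] by (auto simp: dd_def ins_def u_def)
  show ?thesis
    unfolding desB_sum u_def[symmetric] using C1 C2 by simp
qed


definition RB :: "nat \<Rightarrow> int poly \<Rightarrow> int poly" where
  "RB n h = h + smult (2 * int n + 1) (monom 1 1 * h) + smult 2 (monom 1 1 * pderiv h)
      - smult 2 (monom 1 2 * pderiv h)"

lemma RB_add: "RB n (a + b) = RB n a + RB n b"
  by (simp add: RB_def pderiv_add algebra_simps smult_add_right)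

lemma RB_0: "RB n 0 = 0" by (simp add: RB_def)

lemma RB_sum: "RB n (sum f A) = (\<Sum>x\<in>A. RB n (f x))"
  using sum_comp_morphism[of "RB n" f A, OF RB_0 RB_add] by (simp add: o_def)

lemma RB_monom: "RB n (monom 1 d) = monom (2 * int d + 1) d + monom (2 * int n - 2 * int d + 1) (Suc d)"
proof (cases d)
  case 0
  then show ?thesis by (simp add: RB_def mult_monom pderiv_monom smult_monom add_monom)
next
  case (Suc e)
  have "RB n (monom 1 d) = monom 1 d + monom (2 * int n + 1) (Suc d) + monom (2 * int d) d - monom (2 * int d) (Suc d)"
    using Suc by (simp add: RB_def mult_monom pderiv_monom smult_monom)
  also have "\<dots> = monom (2 * int d + 1) d + monom (2 * int n - 2 * int d + 1) (Suc d)"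
    by (simp add: poly_eq_iff coeff_monom)
  finally show ?thesis .
qed

lemma monom_dd: "monom (1::int) (d + 1 - dd w q) = smult (int (dd w q)) (monom 1 d) + smult (1 - int (dd w q)) (monom 1 (Suc d))"
  by (simp add: dd_def smult_monom)

lemma inner_sum:
  assumes w: "w \<in> signed_perms n"
  shows "(\<Sum>p\<in>{1..Suc n}. \<Sum>v\<in>{int (Suc n), - int (Suc n)}. monom (1::int) (desB (Suc n) (ins w p v)))
     = RB n (monom 1 (desB n w))"
proof -
  define d where "d = desB n w"
  define F where "F p = (\<Sum>v\<in>{int (Suc n), - int (Suc n)}. monom (1::int) (desB (Suc n) (ins w p v)))" for p
  have Fv: "F p = monom 1 (desB (Suc n) (ins w p (int (Suc n)))) + monom 1 (desB (Suc n) (ins w p (- int (Suc n))))" for p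
    unfolding F_def by simp
  have Flt: "F (Suc q) = smult 2 (smult (int (dd w q)) (monom 1 d) + smult (1 - int (dd w q)) (monom 1 (Suc d)))"
    if q: "q < n" for q
  proof -
    have "desB (Suc n) (ins w (Suc q) v) = d + 1 - dd w q" if "v \<in> {int (Suc n), - int (Suc n)}" for v
      using desB_ins_lt[OF w q that] unfolding d_def by simp
    moreover have "smult (2::int) p = p + p" for p :: "int poly" by (metis one_add_one smult_add_left smult_1_left)
    ultimately show ?thesis unfolding Fv by (simp add: monom_dd[symmetric])
  qed
  have Fend: "F (Suc n) = monom 1 d + monom 1 (Suc d)"
    unfolding Fv using desB_ins_end[OF w, of "int (Suc n)"] desB_ins_end[OF w, of "- int (Suc n)"]
    unfolding d_def by simp
  have "(\<Sum>p\<in>{1..Suc n}. F p) = (\<Sum>q\<in>{0..n}. F (Suc q))"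
    using sum.shift_bounds_cl_Suc_ivl[of F 0 n] by simp
  also have "\<dots> = (\<Sum>q<n. F (Suc q)) + F (Suc n)"
    by (simp add: atLeast0AtMost lessThan_Suc_atMost[symmetric])
  also have "(\<Sum>q<n. F (Suc q)) = (\<Sum>q<n. smult 2 (smult (int (dd w q)) (monom 1 d) + smult (1 - int (dd w q)) (monom 1 (Suc d))))"
    by (rule sum.cong) (auto simp: Flt)
  also have "\<dots> = smult (2 * (\<Sum>q<n. int (dd w q))) (monom 1 d) + smult (2 * (\<Sum>q<n. (1 - int (dd w q)))) (monom 1 (Suc d))"
  proof -
    have "(\<Sum>q<n. smult 2 (smult (int (dd w q)) (monom 1 d) + smult (1 - int (dd w q)) (monom 1 (Suc d))))
      = (\<Sum>q<n. smult (2 * int (dd w q)) (monom 1 d) + smult (2 * (1 - int (dd w q))) (monom (1::int) (Suc d)))"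
      by (simp add: smult_add_right smult_smult)
    also have "\<dots> = (\<Sum>q<n. smult (2 * int (dd w q)) (monom 1 d)) + (\<Sum>q<n. smult (2 * (1 - int (dd w q))) (monom (1::int) (Suc d)))"
      by (rule sum.distrib)
    also have "\<dots> = smult (\<Sum>q<n. 2 * int (dd w q)) (monom 1 d) + smult (\<Sum>q<n. 2 * (1 - int (dd w q))) (monom (1::int) (Suc d))"
      by (simp only: smult_sum)
    finally show ?thesis by (simp only: sum_distrib_left)
  qed
  also have "(\<Sum>q<n. int (dd w q)) = int d"
    unfolding d_def desB_sum by simp
  also have "(\<Sum>q<n. (1 - int (dd w q))) = int n - int d"
    using \<open>(\<Sum>q<n. int (dd w q)) = int d\<close> by (simp add: sum_subtractf)
  finally have "(\<Sum>p\<in>{1..Suc n}. F p) = smult (2 * int d) (monom 1 d) + smult (2 * (int n - int d)) (monom 1 (Suc d)) + (monom 1 d + monom 1 (Suc d))"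
    using Fend by simp
  also have "\<dots> = RB n (monom 1 d)"
    unfolding RB_monom by (simp add: poly_eq_iff coeff_monom)
  finally show ?thesis unfolding F_def d_def .
qed

lemma eulerB_Suc: "eulerB (Suc n) = RB n (eulerB n)"
proof -
  let ?D = "signed_perms n \<times> {1..Suc n} \<times> {int (Suc n), - int (Suc n)}"
  have "eulerB (Suc n) = (\<Sum>x\<in>?D. monom 1 (desB (Suc n) ((\<lambda>(w,p,v). ins w p v) x)))"
    unfolding eulerB_def by (rule sum.reindex_bij_betw[OF ins_bij, symmetric])
  also have "\<dots> = (\<Sum>w\<in>signed_perms n. \<Sum>p\<in>{1..Suc n}. \<Sum>v\<in>{int (Suc n), - int (Suc n)}. monom 1 (desB (Suc n) (ins w p v)))"
    by (simp only: sum.cartesian_product' split_def fst_conv snd_conv)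
  also have "\<dots> = (\<Sum>w\<in>signed_perms n. RB n (monom 1 (desB n w)))"
    by (intro sum.cong refl inner_sum)
  also have "\<dots> = RB n (eulerB n)"
    unfolding eulerB_def RB_sum ..
  finally show ?thesis .
qed


lemma eulerB_0: "eulerB 0 = 1"
proof -
  have "signed_perms 0 = {\<lambda>i. 0}" unfolding signed_perms_def by (auto simp: bij_betw_def)
  moreover have "desB 0 w = 0" for w by (simp add: desB_def)
  ultimately show ?thesis by (simp add: eulerB_def)
qed

abbreviation XX :: "int poly" where "XX \<equiv> monom 1 1"
abbreviation UU :: "int poly" where "UU \<equiv> 1 - monom 1 1"

lemma smult_of_int: "smult c p = of_int c * p" by (simp add: of_int_poly)

lemma RB_ring: "RB n h = h + (2 * of_nat n + 1) * (XX * h) + 2 * (XX * pderiv h) - 2 * (XX * XX * pderiv h)"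
  unfolding RB_def smult_of_int by (simp add: mult_monom numeral_2_eq_2)

lemma pderiv_UU: "pderiv UU = -1"
  by (simp add: pderiv_diff pderiv_monom)

lemma RB_U: "RB (Suc n) (UU * g) = UU * RB n g"
  unfolding RB_ring pderiv_mult pderiv_UU of_nat_Suc by algebra

lemma RB_smult: "RB n (smult c h) = smult c (RB n h)"
  unfolding RB_def by (simp add: pderiv_smult smult_add_right smult_diff_right mult_smult_right smult_smult mult.commute)

lemma RB_Upow: "l \<le> n \<Longrightarrow> RB n (UU^l * g) = UU^l * RB (n - l) g"
proof (induction l arbitrary: n)
  case 0 then show ?case by simp
next
  case (Suc l)
  then obtain n' where n: "n = Suc n'" "l \<le> n'" by (cases n) auto
  have "RB n (UU^Suc l * g) = RB (Suc n') (UU * (UU^l * g))" using n by (simp add: mult.assoc)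
  also have "\<dots> = UU * RB n' (UU^l * g)" by (rule RB_U)
  also have "\<dots> = UU * (UU^l * RB (n' - l) g)" using Suc.IH[OF n(2)] by simp
  finally show ?case using n by (simp add: mult.assoc)
qed

definition Hp :: "nat \<Rightarrow> nat \<Rightarrow> int poly" where
  "Hp a b = (\<Sum>l\<le>a. smult ((-1)^l * int (a choose l)) (UU^l * eulerB (a + b - l)))"

definition RA :: "nat \<Rightarrow> int poly \<Rightarrow> int poly" where
  "RA n h = RB n h - UU * h"

lemma Hp_b: "Hp a (Suc b) = RB (a + b) (Hp a b)"
  unfolding Hp_def RB_sum
proof (rule sum.cong[OF refl])
  fix l assume l: "l \<in> {..a}"
  have "RB (a + b) (smult ((-1)^l * int (a choose l)) (UU^l * eulerB (a + b - l)))
     = smult ((-1)^l * int (a choose l)) (UU^l * RB (a + b - l) (eulerB (a + b - l)))"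
  proof -
    have "l \<le> a + b" using l by simp
    then show ?thesis by (simp only: RB_smult RB_Upow)
  qed
  also have "RB (a + b - l) (eulerB (a + b - l)) = eulerB (a + Suc b - l)"
    using l eulerB_Suc[of "a + b - l"] by (simp add: Suc_diff_le)
  finally show "smult ((-1)^l * int (a choose l)) (UU^l * eulerB (a + Suc b - l))
     = RB (a + b) (smult ((-1)^l * int (a choose l)) (UU^l * eulerB (a + b - l)))" by simp
qed

lemma Hp_a: "Hp (Suc a) b = RA (a + b) (Hp a b)"
proof -
  define E where "E = eulerB"
  define g1 where "g1 l = smult ((-1)^l * int (a choose l)) (UU^l * E (a + b + 1 - l))" for l
  define g2 where "g2 l = smult ((-1)^l * int (a choose l)) (UU^(Suc l) * E (a + b - l))" for l
  define f where "f l = smult ((-1)^l * int (Suc a choose l)) (UU^l * E (Suc a + b - l))" for l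
  have "RA (a + b) (Hp a b) = Hp a (Suc b) - UU * Hp a b" unfolding RA_def Hp_b ..
  also have "Hp a (Suc b) = (\<Sum>l\<le>a. g1 l)" unfolding Hp_def g1_def E_def by simp
  also have "UU * Hp a b = (\<Sum>l\<le>a. g2 l)" unfolding Hp_def g2_def E_def
    by (simp add: sum_distrib_left mult_smult_right mult.assoc)
  finally have R: "RA (a + b) (Hp a b) = (\<Sum>l\<le>a. g1 l) - (\<Sum>l\<le>a. g2 l)" .
  have "Hp (Suc a) b = (\<Sum>l\<le>Suc a. f l)" unfolding Hp_def f_def E_def ..
  also have "\<dots> = f 0 + (\<Sum>l\<le>a. f (Suc l))" by (rule sum.atMost_Suc_shift)
  also have "(\<Sum>l\<le>a. f (Suc l)) = (\<Sum>l\<le>a. g1 (Suc l) - g2 l)"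
  proof (rule sum.cong[OF refl])
    fix l assume l: "l \<in> {..a}"
    have e: "Suc a + b - Suc l = a + b - l" "a + b + 1 - Suc l = a + b - l" using l by auto
    show "f (Suc l) = g1 (Suc l) - g2 l"
      unfolding f_def g1_def g2_def e by (simp add: algebra_simps smult_add_left[symmetric] smult_diff_left[symmetric])
  qed
  also have "\<dots> = (\<Sum>l\<le>a. g1 (Suc l)) - (\<Sum>l\<le>a. g2 l)" by (rule sum_subtractf)
  also have "f 0 + ((\<Sum>l\<le>a. g1 (Suc l)) - (\<Sum>l\<le>a. g2 l)) = (g1 0 + (\<Sum>l\<le>a. g1 (Suc l))) - (\<Sum>l\<le>a. g2 l)"
    by (simp add: f_def g1_def)
  also have "g1 0 + (\<Sum>l\<le>a. g1 (Suc l)) = (\<Sum>l\<le>Suc a. g1 l)" by (rule sum.atMost_Suc_shift[symmetric])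
  also have "\<dots> = (\<Sum>l\<le>a. g1 l)" by (simp add: g1_def)
  finally show ?thesis using R by simp
qed


lemma pcompose_power: "((p::int poly) ^ n) \<circ>\<^sub>p q = (p \<circ>\<^sub>p q) ^ n"
  by (induction n) (simp_all add: pcompose_mult pcompose_1)

lemma pc_X: "(monom (1::int) 1) \<circ>\<^sub>p (q::int poly) = q"
  by (simp add: One_nat_def monom_Suc pcompose_pCons pcompose_1)

lemma pc_X': "(monom (1::int) (Suc 0)) \<circ>\<^sub>p (q::int poly) = q"
  using pc_X by simp

lemma sum_swap_tri: fixes k :: nat shows "(\<Sum>l\<le>k. \<Sum>i\<in>{l..k}. F l i) = (\<Sum>i\<le>k. \<Sum>l\<le>i. F l i)"
proof (induction k)
  case 0 then show ?case by simp
next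
  case (Suc k)
  have "(\<Sum>l\<le>Suc k. \<Sum>i\<in>{l..Suc k}. F l i) = (\<Sum>l\<le>k. \<Sum>i\<in>{l..Suc k}. F l i) + F (Suc k) (Suc k)"
    by simp
  also have "(\<Sum>l\<le>k. \<Sum>i\<in>{l..Suc k}. F l i) = (\<Sum>l\<le>k. (\<Sum>i\<in>{l..k}. F l i) + F l (Suc k))"
    by (rule sum.cong) (auto simp: sum.cl_ivl_Suc)
  also have "\<dots> = (\<Sum>i\<le>k. \<Sum>l\<le>i. F l i) + (\<Sum>l\<le>k. F l (Suc k))"
    by (simp add: sum.distrib Suc.IH)
  finally show ?case by (simp add: add.assoc)
qed

lemma sum_rev_atMost: fixes k :: nat shows "(\<Sum>i\<le>k. G i) = (\<Sum>r\<le>k. G (k - r))"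
  by (rule sum.reindex_bij_witness[of _ "\<lambda>r. k - r" "\<lambda>r. k - r"]) auto

lemma Tpoly_rep: "Tpoly k = (\<Sum>r\<le>k. monom 1 r * (Hp (k - r) r \<circ>\<^sub>p monom 1 (k + 1)))"
proof -
  define Z :: "int poly" where "Z = monom 1 (k + 1)"
  define P where "P l = eulerB (k - l) \<circ>\<^sub>p Z" for l
  define F where "F l i = smult (int (i choose l)) (P l * (Z - 1)^l * monom 1 (k - i))" for l i
  have "Tpoly k = (\<Sum>l\<le>k. \<Sum>i\<in>{l..k}. F l i)"
    unfolding Tpoly_def Z_def[symmetric] P_def[symmetric] F_def atLeast0AtMost
    by (simp add: sum_distrib_left) (intro sum.cong refl, simp add: smult_monom flip: mult_smult_right)
  also have "\<dots> = (\<Sum>i\<le>k. \<Sum>l\<le>i. F l i)" by (rule sum_swap_tri)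
  also have "\<dots> = (\<Sum>r\<le>k. \<Sum>l\<le>k - r. F l (k - r))" by (rule sum_rev_atMost)
  also have "\<dots> = (\<Sum>r\<le>k. monom 1 r * (Hp (k - r) r \<circ>\<^sub>p Z))"
  proof (rule sum.cong[OF refl])
    fix r assume r: "r \<in> {..k}"
    have "Hp (k - r) r \<circ>\<^sub>p Z = (\<Sum>l\<le>k - r. smult ((-1)^l * int (k - r choose l)) ((1 - Z)^l * P l))"
      unfolding Hp_def pcompose_sum P_def using r
      by (simp add: pcompose_smult pcompose_mult pcompose_power pcompose_diff pc_X pc_X' pcompose_1)
    then have "monom 1 r * (Hp (k - r) r \<circ>\<^sub>p Z) = (\<Sum>l\<le>k - r. monom 1 r * smult ((-1)^l * int (k - r choose l)) ((1 - Z)^l * P l))"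
      by (simp add: sum_distrib_left)
    also have "\<dots> = (\<Sum>l\<le>k - r. F l (k - r))"
    proof (rule sum.cong[OF refl])
      fix l
      have zz: "(Z - 1)^l = (-1)^l * (1 - Z)^l"
        by (metis minus_diff_eq mult_minus1 power_mult_distrib)
      show "monom 1 r * smult ((-1)^l * int (k - r choose l)) ((1 - Z)^l * P l) = F l (k - r)"
        unfolding F_def zz using r by (simp add: smult_of_int algebra_simps)
    qed
    finally show "(\<Sum>l\<le>k - r. F l (k - r)) = monom 1 r * (Hp (k - r) r \<circ>\<^sub>p Z)" by simp
  qed
  finally show ?thesis unfolding Z_def .
qed


lemma coeff_pc_monom:
  assumes m: "0 < m"
  shows "coeff (P \<circ>\<^sub>p monom (1::int) m) j = (if m dvd j then coeff P (j div m) else 0)"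
proof (induction P arbitrary: j rule: pCons_induct)
  case 0 then show ?case by simp
next
  case (pCons a p)
  have e: "coeff (pCons a p \<circ>\<^sub>p monom 1 m) j = (if j = 0 then a else 0) + (if j < m then 0 else coeff (p \<circ>\<^sub>p monom 1 m) (j - m))"
    by (simp add: pcompose_pCons coeff_monom_mult coeff_pCons split: nat.split)
  show ?case
  proof (cases "j = 0")
    case True then show ?thesis using e m by simp
  next
    case False
    show ?thesis
    proof (cases "j < m")
      case True
      then have "\<not> m dvd j" using False by (auto dest: dvd_imp_le)
      then show ?thesis using e True False by simp
    next
      case False2: False
      have dv: "m dvd (j - m) \<longleftrightarrow> m dvd j" using False2
        by (metis dvd_diff_nat dvd_refl le_add_diff_inverse2 not_less dvd_add_left_iff)
      have dd: "j div m = Suc ((j - m) div m)" using False2 m by (simp add: le_div_geq)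
      show ?thesis using e False False2 pCons.IH[of "j - m"] dv dd by simp
    qed
  qed
qed

lemma coeff_Tpoly:
  assumes r: "r \<le> k"
  shows "coeff (Tpoly k) (M * (k + 1) + r) = coeff (Hp (k - r) r) M"
proof -
  define j where "j = M * (k + 1) + r"
  have jm: "j mod (k + 1) = r" unfolding j_def using r mod_mult_self3[of M "k+1" r] by simp
  have tm: "coeff (monom 1 s * (Hp (k - s) s \<circ>\<^sub>p monom 1 (k + 1))) j
      = (if s = r then coeff (Hp (k - r) r) M else 0)" if s: "s \<in> {..k}" for s
  proof -
    have c: "coeff (monom 1 s * (Hp (k - s) s \<circ>\<^sub>p monom 1 (k + 1))) j
        = (if j < s then 0 else if (k + 1) dvd (j - s) then coeff (Hp (k - s) s) ((j - s) div (k + 1)) else 0)"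
      by (simp add: coeff_monom_mult coeff_pc_monom)
    show ?thesis
    proof (cases "s = r")
      case True
      have e1: "j - s = M * (k + 1)" unfolding j_def True by simp
      have f1: "(k + 1) dvd (j - s)" unfolding e1 by (rule dvd_triv_right)
      have f2: "(j - s) div (k + 1) = M" unfolding e1 by (rule nonzero_mult_div_cancel_right) simp
      have f3: "\<not> j < s" unfolding j_def True by simp
      show ?thesis unfolding c using f1 f2 f3 True by simp
    next
      case False
      have "\<not> (s \<le> j \<and> (k + 1) dvd (j - s))"
      proof
        assume h: "s \<le> j \<and> (k + 1) dvd (j - s)"
        then obtain c where "j - s = (k + 1) * c" by (auto elim: dvdE)
        then have "j = c * (k + 1) + s" using h by (metis le_add_diff_inverse2 mult.commute)
        then have "j mod (k + 1) = s" using s mod_mult_self3[of c "k+1" s] by simp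
        then show False using jm False by simp
      qed
      then show ?thesis using c False by auto
    qed
  qed
  have "coeff (Tpoly k) j = (\<Sum>s\<le>k. coeff (monom 1 s * (Hp (k - s) s \<circ>\<^sub>p monom 1 (k + 1))) j)"
    unfolding Tpoly_rep by (simp add: coeff_sum)
  also have "\<dots> = (\<Sum>s\<le>k. if s = r then coeff (Hp (k - r) r) M else 0)"
    by (rule sum.cong[OF refl]) (rule tm)
  also have "\<dots> = coeff (Hp (k - r) r) M" using r by simp
  finally show ?thesis unfolding j_def .
qed


lemma coeff_RB_0: "coeff (RB n h) 0 = coeff h 0"
  by (simp add: RB_def coeff_monom_mult)

lemma coeff_RB_Suc: "coeff (RB n h) (Suc M) = (2 * int M + 3) * coeff h (Suc M) + (2 * int n + 1 - 2 * int M) * coeff h M"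
proof -
  have e: "coeff (monom 1 2 * pderiv h) (Suc M) = int M * coeff h M"
    by (cases M) (simp_all add: coeff_monom_mult coeff_pderiv)
  have "coeff (RB n h) (Suc M) = coeff h (Suc M) + (2 * int n + 1) * coeff h M
        + 2 * ((int M + 1) * coeff h (Suc M)) - 2 * (int M * coeff h M)"
    unfolding RB_def using e by (simp add: coeff_monom_mult coeff_pderiv)
  then show ?thesis by (simp add: algebra_simps)
qed

lemma cX: "coeff (monom (1::int) 1 * h) (Suc M) = coeff h M"
  using coeff_monom_mult[of 1 1 h "Suc M"] by simp

lemma cX0: "coeff (monom (1::int) 1 * h) 0 = 0"
  using coeff_monom_mult[of 1 1 h 0] by simp

lemma coeff_UU_0: "coeff (UU * h) 0 = coeff h 0"
  by (simp only: left_diff_distrib mult_1_left coeff_diff cX0 diff_zero)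

lemma coeff_UU_Suc: "coeff (UU * h) (Suc M) = coeff h (Suc M) - coeff h M"
  by (simp only: left_diff_distrib mult_1_left coeff_diff cX)

lemma coeff_RA_0: "coeff (RA n h) 0 = 0"
  unfolding RA_def coeff_diff coeff_RB_0 coeff_UU_0 by simp

lemma coeff_RA_Suc: "coeff (RA n h) (Suc M) = (2 * int M + 2) * coeff h (Suc M) + (2 * int n + 2 - 2 * int M) * coeff h M"
  unfolding RA_def coeff_diff coeff_RB_Suc coeff_UU_Suc by (simp add: algebra_simps)

definition AI :: "nat \<Rightarrow> (nat \<Rightarrow> int) \<Rightarrow> bool" where
  "AI n f \<longleftrightarrow> (\<forall>i. 0 \<le> f i) \<and> (\<forall>i>n. f i = 0) \<and> (\<forall>i. 2 * i < n \<longrightarrow> f i \<le> f (n - i))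
      \<and> (\<forall>i. 2 * i + 2 \<le> n \<longrightarrow> f (n - i) \<le> f (Suc i))"

lemma AI_step:
  fixes e :: int
  assumes A: "AI n f" and e: "e = 0 \<or> e = 1"
    and g0: "g 0 = e * f 0"
    and gS: "\<And>M. g (Suc M) = (2 * int M + 2 + e) * f (Suc M) + (2 * int n + 2 - 2 * int M - e) * f M"
  shows "AI (Suc n) g"
proof -
  have nn: "\<And>i. 0 \<le> f i" and vz: "\<And>i. i > n \<Longrightarrow> f i = 0"
    and I1: "\<And>i. 2 * i < n \<Longrightarrow> f i \<le> f (n - i)"
    and I2: "\<And>i. 2 * i + 2 \<le> n \<Longrightarrow> f (n - i) \<le> f (Suc i)"
    using A unfolding AI_def by auto
  have e0: "0 \<le> e" "e \<le> 1" using e by auto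
  have nn': "0 \<le> g i" for i
  proof (cases i)
    case 0 then show ?thesis using g0 nn[of 0] e0 by simp
  next
    case (Suc M)
    show ?thesis
    proof (cases "M \<le> n")
      case True
      have "0 \<le> (2 * int M + 2 + e) * f (Suc M)" using nn e0 by simp
      moreover have "0 \<le> (2 * int n + 2 - 2 * int M - e) * f M" using nn e0 True by simp
      ultimately show ?thesis using gS Suc by simp
    next
      case False then show ?thesis using gS Suc vz by simp
    qed
  qed
  have vz': "g i = 0" if "i > Suc n" for i
  proof -
    have "\<exists>M. i = Suc M \<and> M > n" using that by (cases i) auto
    then obtain M where "i = Suc M" "M > n" by blast
    then show ?thesis using gS vz by simp
  qed
  have I1': "g i \<le> g (Suc n - i)" if i: "2 * i < Suc n" for i
  proof (cases i)
    case 0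
    have "f 0 \<le> f n" using I1[of 0] by (cases n) auto
    moreover have "g (Suc n) = (2 - e) * f n" using gS[of n] vz[of "Suc n"] by (simp add: algebra_simps)
    ultimately show ?thesis using 0 g0 e nn[of n] nn[of 0] by auto
  next
    case (Suc M)
    have M: "2 * M + 2 \<le> n" using i Suc by simp
    define a where "a = f M"
    define b where "b = f (n - M)"
    define c where "c = f (Suc M)"
    define d where "d = f (n - Suc M)"
    have ab: "a \<le> b" unfolding a_def b_def using I1[of M] M by simp
    have bc: "b \<le> c" unfolding b_def c_def using I2[of M] M by simp
    have cd: "c \<le> d"
    proof (cases "2 * M + 2 < n")
      case True then show ?thesis unfolding c_def d_def using I1[of "Suc M"] by simp
    next
      case False then have "n - Suc M = Suc M" using M by simp
      then show ?thesis unfolding c_def d_def by simp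
    qed
    have sn: "Suc n - i = Suc (n - Suc M)" using Suc M by simp
    have gl: "g i = (2 * int M + 2 + e) * c + (2 * int n + 2 - 2 * int M - e) * a"
      using gS[of M] Suc a_def c_def by simp
    have nsm: "Suc (n - Suc M) = n - M" using M by simp
    have gr: "g (Suc n - i) = (2 * int n - 2 * int M + e) * b + (2 * int M + 4 - e) * d"
    proof -
      have "g (Suc n - i) = (2 * int (n - Suc M) + 2 + e) * f (Suc (n - Suc M)) + (2 * int n + 2 - 2 * int (n - Suc M) - e) * f (n - Suc M)"
        unfolding sn by (rule gS)
      then show ?thesis unfolding nsm b_def[symmetric] d_def[symmetric] using M by (simp add: of_nat_diff algebra_simps)
    qed
    have "g (Suc n - i) - g i = (2 * int n - 2 * int M + e) * (b - a) + (2 * int M + 2 + e) * (d - c) + (2 - 2 * e) * (d - a)"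
      unfolding gl gr by (simp add: algebra_simps)
    moreover have "0 \<le> (2 * int n - 2 * int M + e) * (b - a)" using ab M e0 by simp
    moreover have "0 \<le> (2 * int M + 2 + e) * (d - c)" using cd e0 by simp
    moreover have "0 \<le> (2 - 2 * e) * (d - a)" using ab bc cd e0 by simp
    ultimately show ?thesis by linarith
  qed
  have I2': "g (Suc n - i) \<le> g (Suc i)" if i: "2 * i + 2 \<le> Suc n" for i
  proof -
    have i1: "2 * i + 1 \<le> n" using i by simp
    define p where "p = f i"
    define q where "q = f (n - i)"
    define s where "s = f (Suc i)"
    define t where "t = f (Suc n - i)"
    have sq: "q \<le> s"
    proof (cases "2 * i + 2 \<le> n")
      case True then show ?thesis unfolding q_def s_def using I2[of i] by simp
    next
      case False then have "n - i = Suc i" using i1 by simp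
      then show ?thesis unfolding q_def s_def by simp
    qed
    have pq: "p \<le> q" unfolding p_def q_def using I1[of i] i1 by simp
    have tp: "t \<le> p"
    proof (cases i)
      case 0 then show ?thesis unfolding t_def p_def using vz[of "Suc n"] nn[of 0] by simp
    next
      case (Suc i')
      then have "f (n - i') \<le> f (Suc i')" using I2[of i'] i1 by simp
      moreover have "Suc n - i = n - i'" using Suc i1 by simp
      ultimately show ?thesis unfolding t_def p_def using Suc by simp
    qed
    have sn: "Suc n - i = Suc (n - i)" using i1 by simp
    have gl: "g (Suc i) = (2 * int i + 2 + e) * s + (2 * int n + 2 - 2 * int i - e) * p"
      using gS[of i] p_def s_def by simp
    have gr: "g (Suc n - i) = (2 * int n - 2 * int i + 2 + e) * t + (2 * int i + 2 - e) * q"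
      unfolding sn gS using i1 sn[symmetric] by (simp add: t_def q_def of_nat_diff algebra_simps)
    have "g (Suc i) - g (Suc n - i) = (2 * int i + 2 - e) * (s - q) + (2 * int n + 2 - 2 * int i - e) * (p - t) + (2 * e) * (s - t)"
      unfolding gl gr by (simp add: algebra_simps)
    moreover have "0 \<le> (2 * int i + 2 - e) * (s - q)" using sq e0 by simp
    moreover have "0 \<le> (2 * int n + 2 - 2 * int i - e) * (p - t)" using tp i1 e0 by simp
    moreover have "0 \<le> (2 * e) * (s - t)" using tp pq sq e0 by simp
    ultimately show ?thesis by linarith
  qed
  show ?thesis unfolding AI_def using nn' vz' I1' I2' by blast
qed


lemma AI_nonneg: "AI n f \<Longrightarrow> 0 \<le> f i" unfolding AI_def by auto

lemma AI_zero: "AI n f \<Longrightarrow> i > n \<Longrightarrow> f i = 0" unfolding AI_def by auto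

lemma AI_up: assumes A: "AI n f" and M: "2 * Suc M \<le> Suc n" shows "f M \<le> f (Suc M)"
proof -
  have I1: "\<And>i. 2 * i < n \<Longrightarrow> f i \<le> f (n - i)"
    and I2: "\<And>i. 2 * i + 2 \<le> n \<Longrightarrow> f (n - i) \<le> f (Suc i)"
    using A unfolding AI_def by auto
  have "f M \<le> f (n - M)" using I1[of M] M by simp
  moreover have "f (n - M) \<le> f (Suc M)"
  proof (cases "2 * M + 2 \<le> n")
    case True then show ?thesis using I2[of M] by simp
  next
    case False then have "n - M = Suc M" using M by simp
    then show ?thesis by simp
  qed
  ultimately show ?thesis by simp
qed

lemma AI_down: assumes A: "AI n f" and M: "n + 2 \<le> 2 * Suc M" shows "f (Suc M) \<le> f M"
proof (cases "Suc M \<le> n")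
  case False
  then have "f (Suc M) = 0" using AI_zero[OF A] by simp
  then show ?thesis using AI_nonneg[OF A, of M] by simp
next
  case True
  have I1: "\<And>i. 2 * i < n \<Longrightarrow> f i \<le> f (n - i)"
    and I2: "\<And>i. 2 * i + 2 \<le> n \<Longrightarrow> f (n - i) \<le> f (Suc i)"
    using A unfolding AI_def by auto
  define i where "i = n - Suc M"
  have i: "2 * i + 2 \<le> n" "Suc M = n - i" "M = n - Suc i" using True M unfolding i_def by auto
  have "f (n - i) \<le> f (Suc i)" using I2[OF i(1)] .
  moreover have "f (Suc i) \<le> f (n - Suc i)"
  proof (cases "2 * Suc i < n")
    case True then show ?thesis using I1[of "Suc i"] by simp
  next
    case False then have "n - Suc i = Suc i" using i(1) by simp
    then show ?thesis by simp
  qed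
  ultimately show ?thesis using i by simp
qed

lemma Hp_00: "Hp 0 0 = 1" by (simp add: Hp_def eulerB_0)

lemma AI_one: "AI 0 (coeff (1::int poly))"
  unfolding AI_def by (auto simp: coeff_1)

lemma AI_Hp0: "AI b (coeff (Hp 0 b))"
proof (induction b)
  case 0 then show ?case unfolding Hp_00 by (rule AI_one)
next
  case (Suc b)
  show ?case
    unfolding Hp_b[of 0 b, simplified]
    by (rule AI_step[of b "coeff (Hp 0 b)" 1 "coeff (RB b (Hp 0 b))"]) (auto simp: coeff_RB_0 coeff_RB_Suc algebra_simps Suc.IH)
qed

lemma AI_Hp: "AI (a + b) (coeff (Hp a b))"
proof (induction a)
  case 0 then show ?case using AI_Hp0 by simp
next
  case (Suc a)
  show ?case
    unfolding Hp_a[of a b] add_Suc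
    by (rule AI_step[of "a + b" "coeff (Hp a b)" 0 "coeff (RA (a + b) (Hp a b))"]) (auto simp: coeff_RA_0 coeff_RA_Suc algebra_simps Suc.IH)
qed


lemma symB_step:
  assumes sym: "\<And>j. j \<le> n \<Longrightarrow> f j = f (n - j)" and vz: "\<And>i. i > n \<Longrightarrow> f i = (0::int)"
    and g0: "g 0 = f 0"
    and gS: "\<And>M. g (Suc M) = (2 * int M + 3) * f (Suc M) + (2 * int n + 1 - 2 * int M) * f M"
    and j: "j \<le> Suc n"
  shows "g j = g (Suc n - j)"
proof -
  have gN: "g (Suc n) = g 0" using gS[of n] vz[of "Suc n"] sym[of 0] g0 by simp
  show ?thesis
  proof (cases j)
    case 0 then show ?thesis using gN by simp
  next
    case (Suc M)
    show ?thesis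
    proof (cases "M = n")
      case True then show ?thesis using Suc gN by simp
    next
      case False
      then have M: "M < n" using Suc j by simp
      have e: "Suc n - j = Suc (n - Suc M)" using Suc M by simp
      have "g (Suc n - j) = (2 * int (n - Suc M) + 3) * f (Suc (n - Suc M)) + (2 * int n + 1 - 2 * int (n - Suc M)) * f (n - Suc M)"
        unfolding e by (rule gS)
      also have "Suc (n - Suc M) = n - M" using M by simp
      also have "f (n - M) = f M" using sym[of M] M by simp
      also have "f (n - Suc M) = f (Suc M)" using sym[of "Suc M"] M by simp
      finally show ?thesis using Suc gS[of M] M by (simp add: of_nat_diff algebra_simps)
    qed
  qed
qed

lemma symA_step:
  assumes sym: "\<And>j. j \<le> Suc n \<Longrightarrow> f j = f (Suc n - j)" and vz: "\<And>i. i > n \<Longrightarrow> f i = (0::int)"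
    and g0: "g 0 = 0"
    and gS: "\<And>M. g (Suc M) = (2 * int M + 2) * f (Suc M) + (2 * int n + 2 - 2 * int M) * f M"
    and j: "j \<le> Suc (Suc n)"
  shows "g j = g (Suc (Suc n) - j)"
proof -
  have gN: "g (Suc (Suc n)) = g 0" using gS[of "Suc n"] vz[of "Suc (Suc n)"] g0 by simp
  show ?thesis
  proof (cases j)
    case 0 then show ?thesis using gN by simp
  next
    case (Suc M)
    show ?thesis
    proof (cases "M = Suc n")
      case True then show ?thesis using Suc gN by simp
    next
      case False
      then have M: "M \<le> n" using Suc j by simp
      have e: "Suc (Suc n) - j = Suc (n - M)" using Suc M by simp
      have "g (Suc (Suc n) - j) = (2 * int (n - M) + 2) * f (Suc (n - M)) + (2 * int n + 2 - 2 * int (n - M)) * f (n - M)"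
        unfolding e by (rule gS)
      also have "f (Suc (n - M)) = f M" using sym[of M] M by (simp add: Suc_diff_le)
      also have "f (n - M) = f (Suc M)" using sym[of "Suc M"] M by simp
      finally show ?thesis using Suc gS[of M] M by (simp add: of_nat_diff algebra_simps)
    qed
  qed
qed

lemma symB: "j \<le> b \<Longrightarrow> coeff (Hp 0 b) j = coeff (Hp 0 b) (b - j)"
proof (induction b arbitrary: j)
  case 0 then show ?case by simp
next
  case (Suc b)
  show ?case unfolding Hp_b[of 0 b, simplified]
  proof (rule symB_step[of b "coeff (Hp 0 b)"])
    show "\<And>j. j \<le> b \<Longrightarrow> coeff (Hp 0 b) j = coeff (Hp 0 b) (b - j)" by (rule Suc.IH)
    show "\<And>i. b < i \<Longrightarrow> coeff (Hp 0 b) i = 0" by (rule AI_zero[OF AI_Hp0])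
    show "coeff (RB b (Hp 0 b)) 0 = coeff (Hp 0 b) 0" by (rule coeff_RB_0)
    show "\<And>M. coeff (RB b (Hp 0 b)) (Suc M) = (2 * int M + 3) * coeff (Hp 0 b) (Suc M) + (2 * int b + 1 - 2 * int M) * coeff (Hp 0 b) M"
      by (rule coeff_RB_Suc)
    show "j \<le> Suc b" by (rule Suc.prems)
  qed
qed

lemma symA: "j \<le> Suc (Suc a) \<Longrightarrow> coeff (Hp (Suc a) 0) j = coeff (Hp (Suc a) 0) (Suc (Suc a) - j)"
proof (induction a arbitrary: j)
  case 0
  have H: "Hp 1 0 = RA 0 (Hp 0 0)" using Hp_a[of 0 0] by simp
  have c0: "coeff (Hp 1 0) 0 = 0" unfolding H coeff_RA_0 ..
  have c2: "coeff (Hp 1 0) (Suc (Suc 0)) = 0" unfolding H coeff_RA_Suc Hp_00 by simp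
  have "j = 0 \<or> j = 1 \<or> j = Suc (Suc 0)" using 0 by auto
  then show ?case using c0 c2 by auto
next
  case (Suc a)
  show ?case unfolding Hp_a[of "Suc a" 0, simplified]
  proof (rule symA_step[of "Suc a" "coeff (Hp (Suc a) 0)"])
    show "\<And>j. j \<le> Suc (Suc a) \<Longrightarrow> coeff (Hp (Suc a) 0) j = coeff (Hp (Suc a) 0) (Suc (Suc a) - j)" by (rule Suc.IH)
    show "\<And>i. Suc a < i \<Longrightarrow> coeff (Hp (Suc a) 0) i = 0" using AI_zero[OF AI_Hp[of "Suc a" 0]] by simp
    show "coeff (RA (Suc a) (Hp (Suc a) 0)) 0 = 0" by (rule coeff_RA_0)
    show "\<And>M. coeff (RA (Suc a) (Hp (Suc a) 0)) (Suc M) = (2 * int M + 2) * coeff (Hp (Suc a) 0) (Suc M) + (2 * int (Suc a) + 2 - 2 * int M) * coeff (Hp (Suc a) 0) M"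
      by (rule coeff_RA_Suc)
    show "j \<le> Suc (Suc (Suc a))" by (rule Suc.prems)
  qed
qed


lemma colD: "coeff (Hp a (Suc b)) M - coeff (Hp (Suc a) b) M = coeff (UU * Hp a b) M"
  unfolding Hp_a Hp_b RA_def by simp

lemma col_up: assumes "2 * M \<le> a + b + 1" shows "0 \<le> coeff (UU * Hp a b) M"
proof (cases M)
  case 0
  have "coeff (UU * Hp a b) 0 = coeff (Hp a b) 0" by (rule coeff_UU_0)
  then show ?thesis using 0 AI_nonneg[OF AI_Hp, of a b 0] by simp
next
  case (Suc M')
  have "coeff (UU * Hp a b) (Suc M') = coeff (Hp a b) (Suc M') - coeff (Hp a b) M'" by (rule coeff_UU_Suc)
  then show ?thesis using Suc AI_up[OF AI_Hp, of M' a b] assms by simp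
qed

lemma col_down: assumes "a + b + 2 \<le> 2 * M" shows "coeff (UU * Hp a b) M \<le> 0"
proof -
  obtain M' where M: "M = Suc M'" using assms by (cases M) auto
  have "coeff (UU * Hp a b) (Suc M') = coeff (Hp a b) (Suc M') - coeff (Hp a b) M'" by (rule coeff_UU_Suc)
  then show ?thesis using M AI_down[OF AI_Hp, of a b M'] assms by simp
qed

lemma chain_up: "s \<le> k \<Longrightarrow> 2 * j \<le> k \<Longrightarrow> coeff (Hp k 0) j \<le> coeff (Hp (k - s) s) j"
proof (induction s)
  case 0 then show ?case by simp
next
  case (Suc s)
  define a where "a = k - Suc s"
  have ka1: "k - s = Suc a" and ka2: "k - Suc s = a" and ka3: "2 * j \<le> a + s + 1"
    using Suc.prems unfolding a_def by arith+
  have c: "0 \<le> coeff (UU * Hp a s) j" using col_up[OF ka3] .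
  have IH: "coeff (Hp k 0) j \<le> coeff (Hp (Suc a) s) j"
    using Suc.IH Suc.prems unfolding ka1 by simp
  show ?case unfolding ka2 using colD[of a s j] c IH by linarith
qed

lemma chain_down: "s \<le> k \<Longrightarrow> k + 1 \<le> 2 * j \<Longrightarrow> coeff (Hp (k - s) s) j \<le> coeff (Hp k 0) j"
proof (induction s)
  case 0 then show ?case by simp
next
  case (Suc s)
  define a where "a = k - Suc s"
  have ka1: "k - s = Suc a" and ka2: "k - Suc s = a" and ka3: "a + s + 2 \<le> 2 * j"
    using Suc.prems unfolding a_def by arith+
  have c: "coeff (UU * Hp a s) j \<le> 0" using col_down[OF ka3] .
  have IH: "coeff (Hp (Suc a) s) j \<le> coeff (Hp k 0) j"
    using Suc.IH Suc.prems unfolding ka1 by simp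
  show ?case unfolding ka2 using colD[of a s j] c IH by linarith
qed

lemma within_eqs: assumes r: "r < k"
  shows "coeff (Tpoly k) (M * (k + 1) + r) = coeff (Hp (Suc (k - Suc r)) r) M"
    "coeff (Tpoly k) (Suc (M * (k + 1) + r)) = coeff (Hp (k - Suc r) (Suc r)) M"
proof -
  have ka1: "k - r = Suc (k - Suc r)" using r by arith
  have "coeff (Tpoly k) (M * (k + 1) + r) = coeff (Hp (k - r) r) M"
    by (rule coeff_Tpoly) (use r in simp)
  then show "coeff (Tpoly k) (M * (k + 1) + r) = coeff (Hp (Suc (k - Suc r)) r) M"
    unfolding ka1 .
  have e: "Suc (M * (k + 1) + r) = M * (k + 1) + Suc r" by simp
  show "coeff (Tpoly k) (Suc (M * (k + 1) + r)) = coeff (Hp (k - Suc r) (Suc r)) M"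
    unfolding e by (rule coeff_Tpoly) (use r in simp)
qed

lemma within_up: assumes r: "r < k" and M: "2 * M \<le> k"
  shows "coeff (Tpoly k) (M * (k + 1) + r) \<le> coeff (Tpoly k) (Suc (M * (k + 1) + r))"
proof -
  have ka3: "2 * M \<le> (k - Suc r) + r + 1" using r M by arith
  have c: "0 \<le> coeff (UU * Hp (k - Suc r) r) M" using col_up[OF ka3] .
  show ?thesis unfolding within_eqs[OF r] using colD[of "k - Suc r" r M] c by linarith
qed

lemma within_down: assumes r: "r < k" and M: "k + 1 \<le> 2 * M"
  shows "coeff (Tpoly k) (Suc (M * (k + 1) + r)) \<le> coeff (Tpoly k) (M * (k + 1) + r)"
proof -
  have ka3: "(k - Suc r) + r + 2 \<le> 2 * M" using r M by arith
  have c: "coeff (UU * Hp (k - Suc r) r) M \<le> 0" using col_down[OF ka3] .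
  show ?thesis unfolding within_eqs[OF r] using colD[of "k - Suc r" r M] c by linarith
qed

lemma bnd_eq:
  "coeff (Tpoly k) (Suc (M * (k + 1) + k)) = coeff (Hp k 0) (Suc M)"
  "coeff (Tpoly k) (M * (k + 1) + k) = coeff (Hp 0 k) M"
proof -
  have e: "Suc (M * (k + 1) + k) = Suc M * (k + 1) + 0" by simp
  show "coeff (Tpoly k) (Suc (M * (k + 1) + k)) = coeff (Hp k 0) (Suc M)"
    unfolding e using coeff_Tpoly[of 0 k "Suc M", OF le0] by (simp only: diff_zero)
  show "coeff (Tpoly k) (M * (k + 1) + k) = coeff (Hp 0 k) M"
    using coeff_Tpoly[of k k M, OF le_refl] by (simp only: diff_self_eq_0)
qed

lemma symA': assumes k: "1 \<le> k" and MK: "M \<le> k"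
  shows "coeff (Hp k 0) (Suc M) = coeff (Hp k 0) (k - M)"
proof -
  obtain a where a: "k = Suc a" using k by (cases k) auto
  have "coeff (Hp (Suc a) 0) (Suc M) = coeff (Hp (Suc a) 0) (Suc (Suc a) - Suc M)"
    by (rule symA) (use MK a in simp)
  then show ?thesis unfolding a by simp
qed

lemma bnd_up: assumes k: "1 \<le> k" and M: "2 * M + 1 \<le> k"
  shows "coeff (Tpoly k) (M * (k + 1) + k) \<le> coeff (Tpoly k) (Suc (M * (k + 1) + k))"
proof -
  have MK: "M \<le> k" using M by simp
  have A: "coeff (Hp k 0) (Suc M) = coeff (Hp k 0) (k - M)" using symA'[OF k MK] .
  have B: "coeff (Hp 0 k) M = coeff (Hp 0 k) (k - M)" using symB[OF MK] .
  have "coeff (Hp (k - k) k) (k - M) \<le> coeff (Hp k 0) (k - M)"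
    by (rule chain_down) (use M in arith)+
  then show ?thesis unfolding bnd_eq A B by simp
qed

lemma bnd_down: assumes k: "1 \<le> k" and M: "k \<le> 2 * M"
  shows "coeff (Tpoly k) (Suc (M * (k + 1) + k)) \<le> coeff (Tpoly k) (M * (k + 1) + k)"
proof (cases "M \<le> k")
  case False
  have "coeff (Hp k 0) (Suc M) = 0" using AI_zero[OF AI_Hp[of k 0]] False by simp
  moreover have "coeff (Hp 0 k) M = 0" using AI_zero[OF AI_Hp[of 0 k]] False by simp
  ultimately show ?thesis unfolding bnd_eq by simp
next
  case MK: True
  have A: "coeff (Hp k 0) (Suc M) = coeff (Hp k 0) (k - M)" using symA'[OF k MK] .
  have B: "coeff (Hp 0 k) M = coeff (Hp 0 k) (k - M)" using symB[OF MK] .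
  have "coeff (Hp k 0) (k - M) \<le> coeff (Hp (k - k) k) (k - M)"
    by (rule chain_up) (use M in arith)+
  then show ?thesis unfolding bnd_eq A B by simp
qed


lemma nth_coeffs': assumes "j < length (coeffs p)" shows "coeffs p ! j = coeff p j"
proof -
  have "p \<noteq> 0" using assms by auto
  moreover have "j \<le> degree p" using assms calculation by (simp add: length_coeffs_degree)
  ultimately show ?thesis by (simp add: coeffs_nth)
qed

lemma mono_chain: fixes c :: "nat \<Rightarrow> int"
  assumes up: "\<And>n. Suc n \<le> t \<Longrightarrow> c n \<le> c (Suc n)"
  shows "i \<le> j \<Longrightarrow> j \<le> t \<Longrightarrow> c i \<le> c j"
proof (induction j)
  case 0 then show ?case by simp
next
  case (Suc j)
  show ?case
  proof (cases "i = Suc j")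
    case True then show ?thesis by simp
  next
    case False
    then have "c i \<le> c j" using Suc by simp
    also have "c j \<le> c (Suc j)" using up Suc.prems by simp
    finally show ?thesis .
  qed
qed

lemma anti_chain: fixes c :: "nat \<Rightarrow> int"
  assumes dn: "\<And>n. t \<le> n \<Longrightarrow> c (Suc n) \<le> c n"
  shows "t \<le> i \<Longrightarrow> i \<le> j \<Longrightarrow> c j \<le> c i"
proof (induction j)
  case 0 then show ?case by simp
next
  case (Suc j)
  show ?case
  proof (cases "i = Suc j")
    case True then show ?thesis by simp
  next
    case False
    then have ij: "i \<le> j" using Suc.prems by simp
    have "c (Suc j) \<le> c j" using dn Suc.prems ij by simp
    also have "c j \<le> c i" using Suc.IH Suc.prems ij by simp
    finally show ?thesis .
  qed
qed

lemma unimodal_from: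
  assumes up: "\<And>n. Suc n \<le> t \<Longrightarrow> coeff p n \<le> coeff p (Suc n)"
    and dn: "\<And>n. t \<le> n \<Longrightarrow> coeff p (Suc n) \<le> coeff p n"
  shows "unimodal_list (coeffs (p :: int poly))"
  unfolding unimodal_list_def
proof (intro exI[of _ t] conjI allI impI)
  fix i j assume h: "i \<le> j \<and> j \<le> t \<and> j < length (coeffs p)"
  then have "coeffs p ! i = coeff p i" "coeffs p ! j = coeff p j" by (auto intro: nth_coeffs')
  then show "coeffs p ! i \<le> coeffs p ! j" using mono_chain[of t "coeff p", OF up] h by simp
next
  fix i j assume h: "t \<le> i \<and> i \<le> j \<and> j < length (coeffs p)"
  then have "coeffs p ! i = coeff p i" "coeffs p ! j = coeff p j" by (auto intro: nth_coeffs')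
  then show "coeffs p ! j \<le> coeffs p ! i" using anti_chain[of t "coeff p", OF dn] h by simp
qed

lemma lex_less:
  fixes k r R M T :: nat
  assumes r: "r \<le> k" and R: "R \<le> k"
  shows "M * (k + 1) + r < T * (k + 1) + R \<longleftrightarrow> M < T \<or> (M = T \<and> r < R)"
proof -
  have h: "A * (k + 1) + x < B * (k + 1) + y" if "A < B" "x \<le> k" for A B x y :: nat
  proof -
    have "Suc A * (k + 1) \<le> B * (k + 1)" using that by (intro mult_le_mono1) simp
    then show ?thesis using that by simp
  qed
  show ?thesis
  proof (cases "M < T")
    case True then show ?thesis using h[OF True r] by simp
  next
    case False
    show ?thesis
    proof (cases "M = T")
      case True then show ?thesis by simp
    next
      case False2: False
      then have "T < M" using False by simp
      then show ?thesis using h[OF \<open>T < M\<close> R, of r] False by simp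
    qed
  qed
qed

lemma decomp: fixes n k :: nat obtains M r where "n = M * (k + 1) + r" "r \<le> k"
proof -
  have "n = n div (k + 1) * (k + 1) + n mod (k + 1)" by (rule div_mult_mod_eq[symmetric])
  moreover have "n mod (k + 1) \<le> k" using mod_less_divisor[of "k + 1" n] by simp
  ultimately show ?thesis using that by blast
qed

theorem mainTheorem4:
  fixes k :: nat
  shows "unimodal_list (coeffs (Tpoly k))"
proof (cases "k = 0")
  case True
  have c: "coeff (Tpoly k) n = coeff (1::int poly) n" for n
    using coeff_Tpoly[of 0 k n] True Hp_00 by simp
  show ?thesis
  proof (rule unimodal_from[of 0])
    fix n :: nat assume "Suc n \<le> 0" then show "coeff (Tpoly k) n \<le> coeff (Tpoly k) (Suc n)" by simp
  next
    fix n :: nat show "coeff (Tpoly k) (Suc n) \<le> coeff (Tpoly k) n" unfolding c by (simp add: coeff_1)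
  qed
next
  case False
  then have k: "1 \<le> k" by simp
  define T where "T = (k + 1) div 2"
  define R where "R = (if even k then k else 0)"
  have R: "R \<le> k" unfolding R_def by simp
  show ?thesis
  proof (rule unimodal_from[of "T * (k + 1) + R"])
    fix n :: nat assume n: "Suc n \<le> T * (k + 1) + R"
    obtain M r where nr: "n = M * (k + 1) + r" "r \<le> k" by (rule decomp)
    have "M < T \<or> (M = T \<and> r < R)" using lex_less[OF nr(2) R, of M T] n nr(1) by simp
    then have cond: "(r < k \<and> 2 * M \<le> k) \<or> (r = k \<and> 2 * M + 1 \<le> k)"
      using nr(2) unfolding T_def R_def by (cases "even k") (auto elim: evenE oddE)
    show "coeff (Tpoly k) n \<le> coeff (Tpoly k) (Suc n)"
      using cond within_up[of r k M] bnd_up[OF k, of M] unfolding nr(1) by auto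
  next
    fix n :: nat assume n: "T * (k + 1) + R \<le> n"
    obtain M r where nr: "n = M * (k + 1) + r" "r \<le> k" by (rule decomp)
    have "\<not> (M < T \<or> (M = T \<and> r < R))" using lex_less[OF nr(2) R, of M T] n nr(1) by simp
    then have cond: "(r < k \<and> k + 1 \<le> 2 * M) \<or> (r = k \<and> k \<le> 2 * M)"
      using nr(2) unfolding T_def R_def by (cases "even k") (auto elim: evenE oddE)
    show "coeff (Tpoly k) (Suc n) \<le> coeff (Tpoly k) n"
      using cond within_down[of r k M] bnd_down[OF k, of M] unfolding nr(1) by auto
  qed
qed

end
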